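(* Let $f:M\to M$ be a partially hyperbolic endomorphism of a closed manifold $M$, let $x\in M$, and let $E^c_f(x)$ and $F^c_f(x)$ be two center directions at $x$ (arising from possibly different orbits through $x$). Then $F^c_f(x)\subset E^c_f(x)\oplus E^s_f(x)$. In particular, the subspace $E^{cs}_f(x)=E^c_f(x)\oplus E^s_f(x)$ does not depend on the orbit through $x$.
   Context: A $C^1$ local diffeomorphism $f:M\to M$ is a partially hyperbolic endomorphism if there are a Riemannian metric and constants $0<\nu<\gamma_1\le\gamma_2<\mu$, $\nu<1<\mu$, $C>1$ such that for every orbit $(x_n)_{n\in\mathbb{Z}}$ ($f(x_n)=x_{n+1}$) there is a splitting $T_{x_n}M=E^s_f(x_n)\oplus E^c_f(x_n)\oplus E^u_f(x_n)$, $Df$-invariant along the orbit, with $\|Df^n_{x_i}v^s\|\le C\nu^n\|v^s\|$, $C^{-1}\gamma_1^n\|v^c\|\le\|Df^n_{x_i}v^c\|\le C\gamma_2^n\|v^c\|$, $C^{-1}\mu^n\|v^u\|\le\|Df^n_{x_i}v^u\|$ for all $n\ge0$, $i\in\mathbb{Z}$, $v^\ast\in E^\ast_f(x_i)$. A center direction at $x$ is $E^c_f(x_0)$ for some orbit with $x_0=x$. The stable subspace $E^s_f(x)$ is the same for all orbits through $x$. *)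

theory Defs
  imports "HOL-Analysis.Analysis"
begin

text \<open>Closed manifolds are modelled as compact embedded C^1 submanifolds of a
Euclidean space (Whitney embedding), described by slice charts.\<close>

definition C1_on :: "'a::euclidean_space set \<Rightarrow> ('a \<Rightarrow> 'b::euclidean_space) \<Rightarrow> bool" where
  "C1_on U \<phi> \<longleftrightarrow> (\<exists>D. (\<forall>z\<in>U. (\<phi> has_derivative blinfun_apply (D z)) (at z)) \<and> continuous_on U D)"

definition closed_C1_submanifold :: "'a::euclidean_space set \<Rightarrow> nat \<Rightarrow> bool" where
  "closed_C1_submanifold M d \<longleftrightarrow> compact M \<and>
     (\<forall>x\<in>M. \<exists>U V (\<phi>::'a \<Rightarrow> 'a) \<psi> S. open U \<and> x \<in> U \<and> open V \<and> homeomorphism U V \<phi> \<psi> \<and>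
        C1_on U \<phi> \<and> C1_on V \<psi> \<and> subspace S \<and> dim S = d \<and> \<phi> ` (M \<inter> U) = V \<inter> S)"

definition tangent_space :: "'a::euclidean_space set \<Rightarrow> 'a \<Rightarrow> 'a set" where
  "tangent_space M x = {v. \<exists>\<gamma> e. e > 0 \<and> (\<forall>t\<in>{-e<..<e}. \<gamma> t \<in> M) \<and> \<gamma> 0 = x \<and>
        (\<gamma> has_vector_derivative v) (at 0)}"

definition riemannian_metric :: "'a::euclidean_space set \<Rightarrow> ('a \<Rightarrow> 'a \<Rightarrow> 'a \<Rightarrow> real) \<Rightarrow> bool" where
  "riemannian_metric M g \<longleftrightarrow>
     (\<forall>x\<in>M. bilinear (g x) \<and> (\<forall>u v. g x u v = g x v u) \<and>
        (\<forall>v\<in>tangent_space M x. v \<noteq> 0 \<longrightarrow> g x v v > 0)) \<and>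
     continuous_on (M \<times> UNIV) (\<lambda>(x, u, v). g x u v)"

definition gnorm :: "('a::real_normed_vector \<Rightarrow> 'a \<Rightarrow> 'a \<Rightarrow> real) \<Rightarrow> 'a \<Rightarrow> 'a \<Rightarrow> real" where
  "gnorm g x v = sqrt (g x v v)"

definition is_orbit :: "'a set \<Rightarrow> ('a \<Rightarrow> 'a) \<Rightarrow> (int \<Rightarrow> 'a) \<Rightarrow> bool" where
  "is_orbit M f xs \<longleftrightarrow> (\<forall>i. xs i \<in> M \<and> f (xs i) = xs (i + 1))"

primrec Dfn :: "('a::real_normed_vector \<Rightarrow> 'a \<Rightarrow>\<^sub>L 'a) \<Rightarrow> (int \<Rightarrow> 'a) \<Rightarrow> int \<Rightarrow> nat \<Rightarrow> 'a \<Rightarrow> 'a" where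
  "Dfn Df xs i 0 v = v"
| "Dfn Df xs i (Suc n) v = blinfun_apply (Df (xs (i + int n))) (Dfn Df xs i n v)"

definition ph_splitting ::
  "'a::euclidean_space set \<Rightarrow> ('a \<Rightarrow> 'a \<Rightarrow>\<^sub>L 'a) \<Rightarrow> ('a \<Rightarrow> 'a \<Rightarrow> 'a \<Rightarrow> real) \<Rightarrow>
   real \<Rightarrow> real \<Rightarrow> real \<Rightarrow> real \<Rightarrow> real \<Rightarrow> (int \<Rightarrow> 'a) \<Rightarrow>
   (int \<Rightarrow> 'a set) \<Rightarrow> (int \<Rightarrow> 'a set) \<Rightarrow> (int \<Rightarrow> 'a set) \<Rightarrow> bool" where
  "ph_splitting M Df g \<nu> \<gamma>1 \<gamma>2 \<mu> C xs Es Ec Eu \<longleftrightarrow>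
     (\<forall>i. subspace (Es i) \<and> subspace (Ec i) \<and> subspace (Eu i) \<and>
        {a + b + c | a b c. a \<in> Es i \<and> b \<in> Ec i \<and> c \<in> Eu i} = tangent_space M (xs i) \<and>
        (\<forall>a\<in>Es i. \<forall>b\<in>Ec i. \<forall>c\<in>Eu i. a + b + c = 0 \<longrightarrow> a = 0 \<and> b = 0 \<and> c = 0) \<and>
        blinfun_apply (Df (xs i)) ` Es i = Es (i + 1) \<and>
        blinfun_apply (Df (xs i)) ` Ec i = Ec (i + 1) \<and>
        blinfun_apply (Df (xs i)) ` Eu i = Eu (i + 1) \<and>
        (\<forall>n. \<forall>v\<in>Es i. gnorm g (xs (i + int n)) (Dfn Df xs i n v) \<le> C * \<nu> ^ n * gnorm g (xs i) v) \<and>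
        (\<forall>n. \<forall>v\<in>Ec i. inverse C * \<gamma>1 ^ n * gnorm g (xs i) v \<le> gnorm g (xs (i + int n)) (Dfn Df xs i n v)
                       \<and> gnorm g (xs (i + int n)) (Dfn Df xs i n v) \<le> C * \<gamma>2 ^ n * gnorm g (xs i) v) \<and>
        (\<forall>n. \<forall>v\<in>Eu i. inverse C * \<mu> ^ n * gnorm g (xs i) v \<le> gnorm g (xs (i + int n)) (Dfn Df xs i n v)))"

text \<open>f : M -> M is a C^1 local diffeomorphism of the closed d-manifold M, Df is the
derivative of a C^1 extension of f to a neighbourhood of M, and f is partially
hyperbolic w.r.t. the Riemannian metric g and the constants nu, gamma1, gamma2, mu, C.\<close>
definition ph_endomorphism ::
  "'a::euclidean_space set \<Rightarrow> nat \<Rightarrow> ('a \<Rightarrow> 'a) \<Rightarrow> ('a \<Rightarrow> 'a \<Rightarrow>\<^sub>L 'a) \<Rightarrow>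
   ('a \<Rightarrow> 'a \<Rightarrow> 'a \<Rightarrow> real) \<Rightarrow> real \<Rightarrow> real \<Rightarrow> real \<Rightarrow> real \<Rightarrow> real \<Rightarrow> bool" where
  "ph_endomorphism M d f Df g \<nu> \<gamma>1 \<gamma>2 \<mu> C \<longleftrightarrow>
     closed_C1_submanifold M d \<and> f ` M \<subseteq> M \<and>
     (\<exists>U F. open U \<and> M \<subseteq> U \<and> (\<forall>x\<in>M. F x = f x) \<and>
        (\<forall>z\<in>U. (F has_derivative blinfun_apply (Df z)) (at z)) \<and> continuous_on U Df) \<and>
     (\<forall>x\<in>M. bij_betw (blinfun_apply (Df x)) (tangent_space M x) (tangent_space M (f x))) \<and>
     riemannian_metric M g \<and>
     0 < \<nu> \<and> \<nu> < \<gamma>1 \<and> \<gamma>1 \<le> \<gamma>2 \<and> \<gamma>2 < \<mu> \<and> \<nu> < 1 \<and> 1 < \<mu> \<and> 1 < C \<and>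
     (\<forall>xs. is_orbit M f xs \<longrightarrow> (\<exists>Es Ec Eu. ph_splitting M Df g \<nu> \<gamma>1 \<gamma>2 \<mu> C xs Es Ec Eu))"

end

theory Submission
  imports Defs
begin

lemma sum3_subspace:
  assumes "subspace A" "subspace B" "subspace D"
  shows "subspace {a + b + c | a b c. a \<in> A \<and> b \<in> B \<and> c \<in> D}"
  unfolding subspace_def
proof (intro conjI ballI allI)
  show "0 \<in> {a + b + c | a b c. a \<in> A \<and> b \<in> B \<and> c \<in> D}"
    using assms by (force intro: subspace_0)
next
  fix x y assume "x \<in> {a + b + c | a b c. a \<in> A \<and> b \<in> B \<and> c \<in> D}"
    "y \<in> {a + b + c | a b c. a \<in> A \<and> b \<in> B \<and> c \<in> D}"
  then obtain a b c a' b' c' where "x = a + b + c" "a \<in> A" "b \<in> B" "c \<in> D"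
    "y = a' + b' + c'" "a' \<in> A" "b' \<in> B" "c' \<in> D" by blast
  then show "x + y \<in> {a + b + c | a b c. a \<in> A \<and> b \<in> B \<and> c \<in> D}"
  proof -
    have e: "x + y = (a + a') + (b + b') + (c + c')" using \<open>x = _\<close> \<open>y = _\<close> by (simp add: algebra_simps)
    have "a + a' \<in> A" "b + b' \<in> B" "c + c' \<in> D" using assms \<open>a \<in> A\<close> \<open>a' \<in> A\<close> \<open>b \<in> B\<close> \<open>b' \<in> B\<close>
        \<open>c \<in> D\<close> \<open>c' \<in> D\<close> by (auto intro: subspace_add)
    then show ?thesis using e by blast
  qed
next
  fix r :: real and x assume "x \<in> {a + b + c | a b c. a \<in> A \<and> b \<in> B \<and> c \<in> D}"
  then obtain a b c where "x = a + b + c" "a \<in> A" "b \<in> B" "c \<in> D" by blast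
  then show "r *\<^sub>R x \<in> {a + b + c | a b c. a \<in> A \<and> b \<in> B \<and> c \<in> D}"
  proof -
    have e: "r *\<^sub>R x = r *\<^sub>R a + r *\<^sub>R b + r *\<^sub>R c" using \<open>x = _\<close> by (simp add: algebra_simps)
    have "r *\<^sub>R a \<in> A" "r *\<^sub>R b \<in> B" "r *\<^sub>R c \<in> D" using assms \<open>a \<in> A\<close> \<open>b \<in> B\<close>
        \<open>c \<in> D\<close> by (auto intro: subspace_scale)
    then show ?thesis using e by blast
  qed
qed

lemma split_facts:
  assumes "ph_splitting M Df g \<nu> \<gamma>1 \<gamma>2 \<mu> C xs Es Ec Eu"
  shows "subspace (tangent_space M (xs i))" "Es i \<subseteq> tangent_space M (xs i)"
    "Ec i \<subseteq> tangent_space M (xs i)" "Eu i \<subseteq> tangent_space M (xs i)"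
proof -
  have S: "subspace (Es i)" "subspace (Ec i)" "subspace (Eu i)"
    and T: "{a + b + c | a b c. a \<in> Es i \<and> b \<in> Ec i \<and> c \<in> Eu i} = tangent_space M (xs i)"
    using assms unfolding ph_splitting_def by auto
  show "subspace (tangent_space M (xs i))" using sum3_subspace[OF S] T by simp
  show "Es i \<subseteq> tangent_space M (xs i)"
  proof
    fix v assume "v \<in> Es i" then show "v \<in> tangent_space M (xs i)"
      using S T[symmetric] by (force intro: subspace_0)
  qed
  show "Ec i \<subseteq> tangent_space M (xs i)"
  proof
    fix v assume "v \<in> Ec i" then show "v \<in> tangent_space M (xs i)"
      using S T[symmetric] by (force intro: subspace_0)
  qed
  show "Eu i \<subseteq> tangent_space M (xs i)"
  proof
    fix v assume "v \<in> Eu i" then show "v \<in> tangent_space M (xs i)"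
      using S T[symmetric] by (force intro: subspace_0)
  qed
qed

lemma Dfn_diff: "Dfn Df xs i n (u - w) = Dfn Df xs i n u - Dfn Df xs i n w"
  by (induction n) (simp_all add: blinfun.diff_right)

lemma Dfn_mem:
  assumes "\<forall>j. blinfun_apply (Df (xs j)) ` E j = E (j + 1)" "v \<in> E i"
  shows "Dfn Df xs i n v \<in> E (i + int n)"
proof (induction n)
  case 0 then show ?case using assms by simp
next
  case (Suc n)
  have "blinfun_apply (Df (xs (i + int n))) (Dfn Df xs i n v) \<in> E (i + int n + 1)"
    using assms(1) Suc by blast
  moreover have "i + int n + 1 = i + int (Suc n)" by simp
  ultimately show ?case by simp
qed

lemma orbit_eq:
  assumes "is_orbit M f xs" "is_orbit M f ys" "xs 0 = ys 0"
  shows "xs (int n) = ys (int n)"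
proof (induction n)
  case 0 then show ?case using assms by simp
next
  case (Suc n)
  have "xs (int n + 1) = ys (int n + 1)"
    using assms Suc unfolding is_orbit_def by metis
  then show ?case by (simp add: add.commute)
qed

lemma Dfn_orbit_eq:
  assumes "is_orbit M f xs" "is_orbit M f ys" "xs 0 = ys 0"
  shows "Dfn Df xs 0 n v = Dfn Df ys 0 n v"
  by (induction n) (simp_all add: orbit_eq[OF assms])

lemma Q_nonneg:
  assumes "riemannian_metric M g" "x \<in> M" "u \<in> tangent_space M x"
  shows "g x u u \<ge> 0"
proof (cases "u = 0")
  case True
  have "bilinear (g x)" using assms unfolding riemannian_metric_def by blast
  then show ?thesis using True bilinear_lzero[of "g x"] by simp
next
  case False then show ?thesis using assms unfolding riemannian_metric_def by force
qed

lemma Q_nonneg_strict: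
  assumes "riemannian_metric M g" "x \<in> M" "u \<in> tangent_space M x"
  shows "u \<noteq> 0 \<Longrightarrow> g x u u > 0"
  using assms unfolding riemannian_metric_def by force

lemma Q_par:
  assumes "riemannian_metric M g" "x \<in> M"
  shows "g x (u + w) (u + w) + g x (u - w) (u - w) = 2 * g x u u + 2 * g x w w"
proof -
  have b: "bilinear (g x)" and s: "g x w u = g x u w" using assms unfolding riemannian_metric_def by auto
  show ?thesis using s by (simp add: bilinear_ladd[OF b] bilinear_radd[OF b] bilinear_lsub[OF b] bilinear_rsub[OF b])
qed

lemma Q_sub_le:
  assumes "riemannian_metric M g" "x \<in> M" "subspace (tangent_space M x)"
    "u \<in> tangent_space M x" "w \<in> tangent_space M x"
  shows "g x (u - w) (u - w) \<le> 2 * g x u u + 2 * g x w w"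
proof -
  have "u + w \<in> tangent_space M x" using assms subspace_add by blast
  then have "g x (u + w) (u + w) \<ge> 0" using Q_nonneg assms by blast
  then show ?thesis using Q_par[OF assms(1,2), of u w] by linarith
qed


lemma Dfn_add: "Dfn Df xs i n (u + w) = Dfn Df xs i n u + Dfn Df xs i n w"
  by (induction n) (simp_all add: blinfun.add_right)

lemma sq_le: "0 \<le> (x::real) \<Longrightarrow> x \<le> y \<Longrightarrow> x^2 \<le> y^2"
  by (simp add: power_mono)

lemma sum_eq: "4 * (K * (g::real) ^ n)^2 + 4 * (C * g ^ n * a)^2 + 2 * (C * g ^ n * b)^2 = (g^n)^2 * (4 * K^2 + 4 * C^2 * a^2 + 2 * C^2 * b^2)"
  by (simp add: power_mult_distrib algebra_simps)

lemma final_ineq: assumes pos: "0 < (\<nu>::real)" "\<nu> \<le> \<gamma>2" "\<gamma>2 < \<mu>" "1 < (C::real)" and g0: "\<gamma>2 > 0"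
  and h: "(inverse C * \<mu> ^ n * Nc)^2 \<le> (\<gamma>2^n)^2 * K2"
  shows "Nc^2 \<le> C^2 * K2 * ((\<gamma>2 / \<mu>)^2)^n"
proof -
    have eqC: "(inverse C * \<mu> ^ n * Nc)^2 = (\<mu>^n)^2 * (Nc)^2 / C^2"
      by (simp add: power_mult_distrib field_simps)
    from h eqC have h2: "(\<mu>^n)^2 * (Nc)^2 / C^2 \<le> (\<gamma>2^n)^2 * K2" by linarith
    have C2: "C^2 > 0" using pos by simp
    have "(\<mu>^n)^2 * (Nc)^2 = C^2 * ((\<mu>^n)^2 * (Nc)^2 / C^2)" using C2 by simp
    also have "\<dots> \<le> C^2 * ((\<gamma>2^n)^2 * K2)" using C2 h2 by (intro mult_left_mono) auto
    finally have ineq: "(\<mu>^n)^2 * (Nc)^2 \<le> C^2 * ((\<gamma>2^n)^2 * K2)" .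
    have mu0: "\<mu> > 0" using pos g0 by linarith
    then have mp: "(\<mu>^n)^2 > 0" by simp
    have "Nc^2 = ((\<mu>^n)^2 * (Nc)^2) / (\<mu>^n)^2" using mp by simp
    also have "\<dots> \<le> C^2 * ((\<gamma>2^n)^2 * K2) / (\<mu>^n)^2"
      using ineq mp by (intro divide_right_mono) auto
    also have "\<dots> = C^2 * K2 * ((\<gamma>2 / \<mu>)^2)^n"
      by (simp add: power_divide mult.commute flip: power_mult)
    finally show ?thesis .
qed

lemma tail_zero: assumes pos: "0 < (\<nu>::real)" "\<nu> \<le> \<gamma>2" "\<gamma>2 < \<mu>" "1 < (C::real)" and g0: "\<gamma>2 > 0"
  and main: "\<And>n. (x::real)^2 \<le> C^2 * K2 * ((\<gamma>2 / \<mu>)^2)^n"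
  shows "x^2 = 0"
proof -
  have mu0: "\<mu> > 0" using pos g0 by linarith
  have q0: "0 \<le> \<gamma>2/\<mu>" "\<gamma>2/\<mu> < 1" using pos g0 mu0 by (auto simp: divide_less_eq)
  have r: "(\<gamma>2 / \<mu>)^2 < 1" "0 \<le> (\<gamma>2 / \<mu>)^2"
    using power_strict_mono[OF q0(2) q0(1), of 2] q0 by auto
  have lim: "(\<lambda>n. C^2 * K2 * ((\<gamma>2 / \<mu>)^2)^n) \<longlonglongrightarrow> C^2 * K2 * 0"
    by (intro tendsto_mult tendsto_const LIMSEQ_power_zero) (use r in simp)
  have "x^2 \<le> C^2 * K2 * 0"
    by (rule LIMSEQ_le_const[OF lim]) (use main in auto)
  then have "x^2 \<le> 0" by simp
  moreover have "x^2 \<ge> 0" by simp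
  ultimately show "x^2 = 0" by linarith
qed

lemma key:
  assumes rm: "riemannian_metric M g" and orb: "is_orbit M f xs"
    and sp: "ph_splitting M Df g \<nu> \<gamma>1 \<gamma>2 \<mu> C xs Es Ec Eu"
    and pos: "0 < \<nu>" "\<nu> \<le> \<gamma>2" "\<gamma>2 < \<mu>" "1 < C"
    and v: "v \<in> tangent_space M (xs 0)"
    and bound: "\<forall>n. gnorm g (xs (int n)) (Dfn Df xs 0 n v) \<le> K * \<gamma>2 ^ n"
  shows "v \<in> {a + b | a b. a \<in> Ec 0 \<and> b \<in> Es 0}"
proof -
  have T0: "{a + b + c | a b c. a \<in> Es 0 \<and> b \<in> Ec 0 \<and> c \<in> Eu 0} = tangent_space M (xs 0)"
    using sp unfolding ph_splitting_def by auto
  have "v \<in> {a + b + c | a b c. a \<in> Es 0 \<and> b \<in> Ec 0 \<and> c \<in> Eu 0}" using v T0 by simp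
  then obtain a b c where abc: "v = a + b + c" "a \<in> Es 0" "b \<in> Ec 0" "c \<in> Eu 0"
    by blast
  define D where "D n u = Dfn Df xs 0 n u" for n u
  define N where "N n u = gnorm g (xs (int n)) u" for n u
  define Q where "Q n u = g (xs (int n)) u u" for n u
  have inM: "xs (int n) \<in> M" for n using orb unfolding is_orbit_def by blast
  have Tsub: "subspace (tangent_space M (xs (int n)))" for n using split_facts(1)[OF sp] .
  have inv: "\<forall>j. blinfun_apply (Df (xs j)) ` Es j = Es (j + 1)"
    "\<forall>j. blinfun_apply (Df (xs j)) ` Ec j = Ec (j + 1)"
    "\<forall>j. blinfun_apply (Df (xs j)) ` Eu j = Eu (j + 1)"
    using sp unfolding ph_splitting_def by auto
  have Da: "D n a \<in> tangent_space M (xs (int n))" for n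
    using Dfn_mem[OF inv(1) abc(2), of n] split_facts(2)[OF sp, of "int n"] unfolding D_def by auto
  have Db: "D n b \<in> tangent_space M (xs (int n))" for n
    using Dfn_mem[OF inv(2) abc(3), of n] split_facts(3)[OF sp, of "int n"] unfolding D_def by auto
  have Dc: "D n c \<in> tangent_space M (xs (int n))" for n
    using Dfn_mem[OF inv(3) abc(4), of n] split_facts(4)[OF sp, of "int n"] unfolding D_def by auto
  have Dv: "D n v = D n a + D n b + D n c" for n unfolding D_def abc(1) Dfn_add by simp
  have Dvm: "D n v \<in> tangent_space M (xs (int n))" for n
    unfolding Dv using Da[of n] Db[of n] Dc[of n] Tsub[of n] by (intro subspace_add)
  have Dcv: "D n c = (D n v - D n a) - D n b" for n using Dv by (simp add: algebra_simps)
  have Qnn: "u \<in> tangent_space M (xs (int n)) \<Longrightarrow> Q n u \<ge> 0" for n u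
    unfolding Q_def using Q_nonneg[OF rm inM] by blast
  have NQ: "u \<in> tangent_space M (xs (int n)) \<Longrightarrow> (N n u)^2 = Q n u" for n u
    using Qnn unfolding N_def Q_def gnorm_def by simp
  have Nnn: "u \<in> tangent_space M (xs (int n)) \<Longrightarrow> N n u \<ge> 0" for n u
    using Qnn unfolding N_def Q_def gnorm_def by simp
  have a0T: "a \<in> tangent_space M (xs (int 0))" using split_facts(2)[OF sp, of 0] abc(2) by auto
  have b0T: "b \<in> tangent_space M (xs (int 0))" using split_facts(3)[OF sp, of 0] abc(3) by auto
  have c0T': "c \<in> tangent_space M (xs (int 0))" using split_facts(4)[OF sp, of 0] abc(4) by auto
  have g0: "\<gamma>2 > 0" using pos by linarith
  have sp0: "\<forall>n. \<forall>v\<in>Es 0. gnorm g (xs (0 + int n)) (Dfn Df xs 0 n v) \<le> C * \<nu> ^ n * gnorm g (xs 0) v"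
    using spec[OF sp[unfolded ph_splitting_def], of 0] by (elim conjE) assumption
  have sp1: "\<forall>n. \<forall>v\<in>Ec 0. inverse C * \<gamma>1 ^ n * gnorm g (xs 0) v \<le> gnorm g (xs (0 + int n)) (Dfn Df xs 0 n v)
                       \<and> gnorm g (xs (0 + int n)) (Dfn Df xs 0 n v) \<le> C * \<gamma>2 ^ n * gnorm g (xs 0) v"
    using spec[OF sp[unfolded ph_splitting_def], of 0] by (elim conjE) assumption
  have sp2: "\<forall>n. \<forall>v\<in>Eu 0. inverse C * \<mu> ^ n * gnorm g (xs 0) v \<le> gnorm g (xs (0 + int n)) (Dfn Df xs 0 n v)"
    using spec[OF sp[unfolded ph_splitting_def], of 0] by (elim conjE) assumption
  note spn = sp0 sp1 sp2
  define K2 where "K2 = 4 * K^2 + 4 * C^2 * (N 0 a)^2 + 2 * C^2 * (N 0 b)^2"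
  have main: "(N 0 c)^2 \<le> C^2 * K2 * ((\<gamma>2 / \<mu>)^2)^n" for n
  proof -
    have Dvam: "D n v - D n a \<in> tangent_space M (xs (int n))"
      using Dvm[of n] Da[of n] Tsub[of n] by (intro subspace_diff)
    have q1: "Q n (D n c) \<le> 2 * Q n (D n v - D n a) + 2 * Q n (D n b)"
      unfolding Dcv Q_def by (rule Q_sub_le[OF rm inM Tsub Dvam Db])
    have q2: "Q n (D n v - D n a) \<le> 2 * Q n (D n v) + 2 * Q n (D n a)"
      unfolding Q_def by (rule Q_sub_le[OF rm inM Tsub Dvm Da])
    have bv: "N n (D n v) \<le> K * \<gamma>2 ^ n" using bound unfolding N_def D_def by simp
    have ba: "N n (D n a) \<le> C * \<nu> ^ n * N 0 a"
      using spn(1) abc(2) unfolding N_def D_def by simp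
    have "C * \<nu> ^ n * N 0 a \<le> C * \<gamma>2 ^ n * N 0 a"
      using pos Nnn[OF a0T] by (intro mult_right_mono mult_left_mono power_mono) auto
    with ba have ba': "N n (D n a) \<le> C * \<gamma>2 ^ n * N 0 a" by linarith
    have bb: "N n (D n b) \<le> C * \<gamma>2 ^ n * N 0 b"
      using spn(2) abc(3) unfolding N_def D_def by simp
    have bc: "inverse C * \<mu> ^ n * N 0 c \<le> N n (D n c)"
      using spn(3) abc(4) unfolding N_def D_def by simp
    have Qv: "Q n (D n v) \<le> (K * \<gamma>2 ^ n)^2" using sq_le[OF Nnn[OF Dvm] bv] NQ[OF Dvm] by simp
    have Qa: "Q n (D n a) \<le> (C * \<gamma>2 ^ n * N 0 a)^2" using sq_le[OF Nnn[OF Da] ba'] NQ[OF Da] by simp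
    have Qb: "Q n (D n b) \<le> (C * \<gamma>2 ^ n * N 0 b)^2" using sq_le[OF Nnn[OF Db] bb] NQ[OF Db] by simp
    have "0 \<le> inverse C * \<mu> ^ n * N 0 c" using pos g0 Nnn[OF c0T'] by simp
    from sq_le[OF this bc] NQ[OF Dc]
    have Qc: "(inverse C * \<mu> ^ n * N 0 c)^2 \<le> Q n (D n c)" by simp
    have "(inverse C * \<mu> ^ n * N 0 c)^2 \<le> 4 * (K * \<gamma>2 ^ n)^2 + 4 * (C * \<gamma>2 ^ n * N 0 a)^2
       + 2 * (C * \<gamma>2 ^ n * N 0 b)^2" using Qc q1 q2 Qv Qa Qb by linarith
    also have "\<dots> = (\<gamma>2^n)^2 * K2" unfolding K2_def by (rule sum_eq)
    finally show ?thesis by (rule final_ineq[OF pos g0])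
  qed
  have Nc0: "(N 0 c)^2 = 0" by (rule tail_zero[OF pos g0 main])
  have c0T: "c \<in> tangent_space M (xs 0)" using split_facts(4)[OF sp, of 0] abc(4) by auto
  have "Q 0 c = 0" using NQ[OF c0T'] Nc0 by simp
  then have "c = 0" using Q_nonneg_strict[OF rm inM[of 0] c0T'] unfolding Q_def by force
  then have "v = b + a" using abc by (simp add: add.commute)
  then show ?thesis using abc by blast
qed


lemma incl:
  assumes rm: "riemannian_metric M g" and ox: "is_orbit M f xs" and oy: "is_orbit M f ys"
    and e0: "xs 0 = ys 0"
    and spx: "ph_splitting M Df g \<nu> \<gamma>1 \<gamma>2 \<mu> C xs Es Ec Eu"
    and spy: "ph_splitting M Df g \<nu> \<gamma>1 \<gamma>2 \<mu> C ys Fs Fc Fu"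
    and pos: "0 < \<nu>" "\<nu> \<le> \<gamma>2" "\<gamma>2 < \<mu>" "1 < C"
  shows "{a + b | a b. a \<in> Fc 0 \<and> b \<in> Fs 0} \<subseteq> {a + b | a b. a \<in> Ec 0 \<and> b \<in> Es 0}"
    and "Fc 0 \<subseteq> {a + b | a b. a \<in> Ec 0 \<and> b \<in> Es 0}"
proof -
  have ys0M: "ys 0 \<in> M" using oy unfolding is_orbit_def by blast
  have same: "gnorm g (xs (int n)) (Dfn Df xs 0 n u) = gnorm g (ys (int n)) (Dfn Df ys 0 n u)" for n u
    using orbit_eq[OF ox oy e0, of n] Dfn_orbit_eq[OF ox oy e0, of Df n u] by simp
  have FcE: "u \<in> {a + b | a b. a \<in> Ec 0 \<and> b \<in> Es 0}" if u: "u \<in> Fc 0" for u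
  proof (rule key[OF rm ox spx pos, where K = "C * gnorm g (ys 0) u"])
    show "u \<in> tangent_space M (xs 0)" using split_facts(3)[OF spy, of 0] u e0 by auto
    have b: "\<forall>n. gnorm g (ys (0 + int n)) (Dfn Df ys 0 n u) \<le> C * \<gamma>2 ^ n * gnorm g (ys 0) u"
      using spec[OF spy[unfolded ph_splitting_def], of 0] u by blast
    show "\<forall>n. gnorm g (xs (int n)) (Dfn Df xs 0 n u) \<le> C * gnorm g (ys 0) u * \<gamma>2 ^ n"
      using b by (simp add: same mult_ac)
  qed
  have FsE: "u \<in> {a + b | a b. a \<in> Ec 0 \<and> b \<in> Es 0}" if u: "u \<in> Fs 0" for u
  proof (rule key[OF rm ox spx pos, where K = "C * gnorm g (ys 0) u"])
    have uT: "u \<in> tangent_space M (ys 0)" using split_facts(2)[OF spy, of 0] u by auto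
    then show "u \<in> tangent_space M (xs 0)" using e0 by simp
    have nn: "gnorm g (ys 0) u \<ge> 0" unfolding gnorm_def using Q_nonneg[OF rm ys0M uT] by simp
    have b: "\<forall>n. gnorm g (ys (0 + int n)) (Dfn Df ys 0 n u) \<le> C * \<nu> ^ n * gnorm g (ys 0) u"
      using spec[OF spy[unfolded ph_splitting_def], of 0] u by blast
    show "\<forall>n. gnorm g (xs (int n)) (Dfn Df xs 0 n u) \<le> C * gnorm g (ys 0) u * \<gamma>2 ^ n"
    proof
      fix n
      have "C * \<nu> ^ n * gnorm g (ys 0) u \<le> C * \<gamma>2 ^ n * gnorm g (ys 0) u"
        using pos nn by (intro mult_right_mono mult_left_mono power_mono) auto
      then show "gnorm g (xs (int n)) (Dfn Df xs 0 n u) \<le> C * gnorm g (ys 0) u * \<gamma>2 ^ n"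
        using b[rule_format, of n] by (simp add: same mult_ac)
    qed
  qed
  show "Fc 0 \<subseteq> {a + b | a b. a \<in> Ec 0 \<and> b \<in> Es 0}" using FcE by blast
  have sEc: "subspace (Ec 0)" and sEs: "subspace (Es 0)" using spx unfolding ph_splitting_def by auto
  show "{a + b | a b. a \<in> Fc 0 \<and> b \<in> Fs 0} \<subseteq> {a + b | a b. a \<in> Ec 0 \<and> b \<in> Es 0}"
  proof
    fix x assume "x \<in> {a + b | a b. a \<in> Fc 0 \<and> b \<in> Fs 0}"
    then obtain a b where x: "x = a + b" "a \<in> Fc 0" "b \<in> Fs 0" by blast
    obtain a1 a2 where a: "a = a1 + a2" "a1 \<in> Ec 0" "a2 \<in> Es 0" using FcE[OF x(2)] by blast
    obtain b1 b2 where b: "b = b1 + b2" "b1 \<in> Ec 0" "b2 \<in> Es 0" using FsE[OF x(3)] by blast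
    have "x = (a1 + b1) + (a2 + b2)" using x a b by (simp add: algebra_simps)
    moreover have "a1 + b1 \<in> Ec 0" using sEc a b by (simp add: subspace_add)
    moreover have "a2 + b2 \<in> Es 0" using sEs a b by (simp add: subspace_add)
    ultimately show "x \<in> {a + b | a b. a \<in> Ec 0 \<and> b \<in> Es 0}" by blast
  qed
qed

theorem mainTheorem8:
  fixes M :: "'a::euclidean_space set" and f :: "'a \<Rightarrow> 'a" and Df :: "'a \<Rightarrow> 'a \<Rightarrow>\<^sub>L 'a"
    and g :: "'a \<Rightarrow> 'a \<Rightarrow> 'a \<Rightarrow> real" and xs ys :: "int \<Rightarrow> 'a"
    and Es Ec Eu Fs Fc Fu :: "int \<Rightarrow> 'a set"
  assumes "ph_endomorphism M d f Df g \<nu> \<gamma>1 \<gamma>2 \<mu> C"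
    and "p \<in> M"
    and "is_orbit M f xs" and "xs 0 = p" and "ph_splitting M Df g \<nu> \<gamma>1 \<gamma>2 \<mu> C xs Es Ec Eu"
    and "is_orbit M f ys" and "ys 0 = p" and "ph_splitting M Df g \<nu> \<gamma>1 \<gamma>2 \<mu> C ys Fs Fc Fu"
  shows "Fc 0 \<subseteq> {a + b | a b. a \<in> Ec 0 \<and> b \<in> Es 0}
    \<and> {a + b | a b. a \<in> Ec 0 \<and> b \<in> Es 0} = {a + b | a b. a \<in> Fc 0 \<and> b \<in> Fs 0}"
proof -
  have rm: "riemannian_metric M g" and pos: "0 < \<nu>" "\<nu> \<le> \<gamma>2" "\<gamma>2 < \<mu>" "1 < C"
    using assms(1) unfolding ph_endomorphism_def by auto
  have e: "xs 0 = ys 0" "ys 0 = xs 0" using assms by auto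
  note i1 = incl[OF rm assms(3) assms(6) e(1) assms(5) assms(8) pos]
  note i2 = incl[OF rm assms(6) assms(3) e(2) assms(8) assms(5) pos]
  show ?thesis using i1 i2 by blast
qed

end
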